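(* Let $n\ge 2$ and $k\ge1$. Let $M$ be the $(k+1)\times(k+1)$ upper triangular matrix with $M(i,i)=k+1$ for all $i$, $M(i,j)=i$ for $i<j$, and $M(i,j)=0$ for $i>j$; let $I$ be the identity matrix of dimension $k+1$ and $N:=M-(k+1)I$. Then for any $l\in[k]$ and $i\in[k+1]$ with $i+l\le k+1$, $$N^{l}(i,i+l)=\frac{(i+l-1)!}{(i-1)!}.$$
   Context: For a matrix $A$, $A(i,j)$ denotes the entry in row $i$ and column $j$; $[k]=\{1,\dots,k\}$. *)

theory Defs
  imports "Jordan_Normal_Form.Matrix"
begin

(* Jordan_Normal_Form matrices are 0-indexed:
   entry (r,c) here corresponds to the paper's entry (r+1,c+1). *)
definition M_mat :: "nat \<Rightarrow> real mat" where
  "M_mat k = mat (k+1) (k+1)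
     (\<lambda>(r,c). if r = c then real (k+1) else if r < c then real (r+1) else 0)"

definition N_mat :: "nat \<Rightarrow> real mat" where
  "N_mat k = M_mat k - real (k+1) \<cdot>\<^sub>m 1\<^sub>m (k+1)"

end

theory Submission
  imports Defs
begin

lemma N_carrier: "N_mat k \<in> carrier_mat (k+1) (k+1)"
  unfolding N_mat_def M_mat_def by auto

lemma N_entry: "r < k+1 \<Longrightarrow> c < k+1 \<Longrightarrow>
  N_mat k $$ (r,c) = (if r < c then real (r+1) else 0)"
  unfolding N_mat_def M_mat_def by auto

lemma N_pow_entries:
  fixes k l r c :: nat
  assumes "r < k+1" "c < k+1"
  shows "(c < r + l \<longrightarrow> (N_mat k ^\<^sub>m l) $$ (r,c) = 0) \<and>
         (c = r + l \<longrightarrow> (N_mat k ^\<^sub>m l) $$ (r,c) = (\<Prod>j\<in>{r+1..r+l}. real j))"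
  using assms
proof (induction l arbitrary: r c)
  case 0
  then show ?case using N_carrier[of k] by auto
next
  case (Suc l)
  let ?P = "N_mat k ^\<^sub>m l"
  let ?N = "N_mat k"
  have car: "?P \<in> carrier_mat (k+1) (k+1)" using N_carrier pow_carrier_mat by blast
  have eq: "(N_mat k ^\<^sub>m Suc l) $$ (r,c) = (\<Sum>j\<in>{0..<k+1}. ?P $$ (r,j) * ?N $$ (j,c))"
    using Suc.prems car N_carrier[of k]
    by (simp add: index_mult_mat scalar_prod_def row_def col_def mult.commute)
  have z: "?P $$ (r,j) * ?N $$ (j,c) = 0" if "j < k+1" "j \<noteq> r + l" "c \<le> r + l + 1" for j
  proof (cases "j < r + l")
    case True
    then show ?thesis using Suc.IH[of r j] Suc.prems that by auto
  next
    case False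
    then have "c \<le> j" using that by auto
    then show ?thesis using N_entry[of j k c] that Suc.prems by auto
  qed
  show ?case
  proof (intro conjI impI)
    assume "c < r + Suc l"
    show "(N_mat k ^\<^sub>m Suc l) $$ (r,c) = 0"
    proof -
      have "?P $$ (r,j) * ?N $$ (j,c) = 0" if "j \<in> {0..<k+1}" for j
      proof (cases "j = r + l")
        case True
        then show ?thesis using N_entry[of j k c] that Suc.prems \<open>c < r + Suc l\<close> by auto
      next
        case False
        then show ?thesis using z[of j] that \<open>c < r + Suc l\<close> by auto
      qed
      then show ?thesis unfolding eq by (simp add: sum.neutral)
    qed
  next
    assume c: "c = r + Suc l"
    have jin: "r + l \<in> {0..<k+1}" using c Suc.prems by auto
    have "(\<Sum>j\<in>{0..<k+1}. ?P $$ (r,j) * ?N $$ (j,c)) =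
          ?P $$ (r,r+l) * ?N $$ (r+l,c) + (\<Sum>j\<in>{0..<k+1} - {r+l}. ?P $$ (r,j) * ?N $$ (j,c))"
      using sum.remove[OF _ jin] by simp
    also have "(\<Sum>j\<in>{0..<k+1} - {r+l}. ?P $$ (r,j) * ?N $$ (j,c)) = 0"
      using z c by (intro sum.neutral) auto
    also have "?P $$ (r,r+l) = (\<Prod>j\<in>{r+1..r+l}. real j)"
      using Suc.IH[of r "r+l"] Suc.prems c by auto
    also have "?N $$ (r+l,c) = real (r + l + 1)"
      using N_entry[of "r+l" k c] Suc.prems c by auto
    also have "(\<Prod>j\<in>{r+1..r+l}. real j) * real (r + l + 1) + 0 = (\<Prod>j\<in>{r+1..r+Suc l}. real j)"
      by (simp add: prod.nat_ivl_Suc')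
    finally show "(N_mat k ^\<^sub>m Suc l) $$ (r,c) = (\<Prod>j\<in>{r+1..r+Suc l}. real j)"
      using eq by simp
  qed
qed

lemma prod_fact: "(\<Prod>j\<in>{r+1..r+l}. real j) = fact (r + l) / fact r"
proof (induction l)
  case 0 then show ?case by simp
next
  case (Suc l)
  have "(\<Prod>j\<in>{r+1..r+Suc l}. real j) = (\<Prod>j\<in>{r+1..r+l}. real j) * real (r + Suc l)"
    by (simp add: prod.nat_ivl_Suc')
  also have "\<dots> = fact (r + l) / fact r * real (r + Suc l)" using Suc by simp
  also have "\<dots> = fact (r + Suc l) / fact r"
    by (simp only: add_Suc_right fact_Suc) (simp add: field_simps)
  finally show ?case .
qed

theorem lemma3p8:
  fixes n k l i :: nat
  assumes "n \<ge> 2" and "k \<ge> 1"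
    and "l \<in> {1..k}" and "i \<in> {1..k+1}" and "i + l \<le> k + 1"
  shows "(N_mat k ^\<^sub>m l) $$ (i - 1, i + l - 1) = fact (i + l - 1) / fact (i - 1)"
proof -
  have r: "i - 1 < k + 1" "i + l - 1 < k + 1" "i + l - 1 = (i - 1) + l" using assms by auto
  have "(N_mat k ^\<^sub>m l) $$ (i - 1, i + l - 1) = (\<Prod>j\<in>{(i-1)+1..(i-1)+l}. real j)"
    using N_pow_entries[OF r(1) r(2), of l] r(3) by simp
  also have "\<dots> = fact ((i-1) + l) / fact (i-1)" by (rule prod_fact)
  finally show ?thesis using r(3) by simp
qed

end
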